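(* Let $\ell\ne-2$, $z\in\mathbb Q$ with $0<z<1$, and consider $V(\ell,\mathbb C)$ as a $\mathbb Q$-graded vertex operator algebra with conformal vector $\omega_z$. Let $M$ be any weak $V(\ell,\mathbb C)$-module. Then $O(M)$ is the linear span of the elements $$(f(-m)+f(1-m))u,\qquad e(-m)u,\qquad (h(-m-1)+h(-m))u$$ for all positive integers $m$ and all $u\in M$.
   Context: $\mathfrak g=sl_2$ (basis $e,f,h$), $\tilde{\mathfrak g}=\mathbb C[x,x^{-1}]\otimes\mathfrak g\oplus\mathbb Cc$ the affine Lie algebra with $[a(m),b(n)]=[a,b](m+n)+m\langle a,b\rangle\delta_{m+n,0}c$, $a(n)=x^n\otimes a$, $\langle h,h\rangle=2$, $\langle e,f\rangle=1$. $V(\ell,\mathbb C)=U(\tilde{\mathfrak g})\otimes_{U(\mathbb C[x]\otimes\mathfrak g\oplus\mathbb Cc)}\mathbb C$ (trivial $\mathfrak g\otimes\mathbb C[x]$-action, $c$ acting as $\ell$), a vertex operator algebra with vacuum $\mathbf 1$, $Y(a(-1)\mathbf 1,z)=\sum a(n)z^{-n-1}$, Segal–Sugawara vector $\omega$; $\omega_z=\omega+\frac12zh(-2)\mathbf 1$ makes it a $\mathbb Q$-graded vertex operator algebra with $L_z(0)=L(0)-\frac12zh(0)$, so that ${\rm wt}\,h(-1)\mathbf 1=1$, ${\rm wt}\,e(-1)\mathbf 1=1-z$, ${\rm wt}\,f(-1)\mathbf 1=1+z$. Weak $V(\ell,\mathbb C)$-modules are the restricted level-$\ell$ $\tilde{\mathfrak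 g}$-modules with $Y(a(-1)\mathbf 1,z)=\sum a(n)z^{-n-1}$. For homogeneous $a$ (w.r.t. $L_z(0)$), $\varepsilon(a)=1$ if ${\rm wt}a\in\mathbb Z$, else $0$; $[\cdot]$ is the greatest-integer function; $O(M)$ is the span of ${\rm Res}_x\frac{(1+x)^{[{\rm wt}a]}}{x^{1+\varepsilon(a)}}Y(a,x)u$ for homogeneous $a\in V(\ell,\mathbb C)$ and $u\in M$. *)

theory Defs
  imports Complex_Main "HOL-Library.Groups_Big_Fun"
begin

datatype sl2 = E | F | H

fun sl2_form :: "sl2 \<Rightarrow> sl2 \<Rightarrow> complex" where
  "sl2_form H H = 2"
| "sl2_form E F = 1"
| "sl2_form F E = 1"
| "sl2_form _ _ = 0"

text \<open>Action of [a,b](k) on u, where act b k is the operator b(k) = x^k (x) b.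
  [h,e]=2e, [h,f]=-2f, [e,f]=h.\<close>
fun bracket_act :: "(complex \<Rightarrow> 'm \<Rightarrow> 'm) \<Rightarrow> (sl2 \<Rightarrow> int \<Rightarrow> 'm \<Rightarrow> 'm)
     \<Rightarrow> sl2 \<Rightarrow> sl2 \<Rightarrow> int \<Rightarrow> 'm \<Rightarrow> 'm" where
  "bracket_act scale act H E k u = scale 2 (act E k u)"
| "bracket_act scale act E H k u = scale (-2) (act E k u)"
| "bracket_act scale act H F k u = scale (-2) (act F k u)"
| "bracket_act scale act F H k u = scale 2 (act F k u)"
| "bracket_act scale act E F k u = act H k u"
| "bracket_act scale act F E k u = scale (-1) (act H k u)"
| "bracket_act scale act a b k u = scale 0 u"

text \<open>A weak V(l,C)-module = restricted level-l module for the affine algebra of sl_2: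
  a complex vector space M (scalar multiplication scale) with linear operators
  act a n = a(n), satisfying
  [a(m),b(n)] = [a,b](m+n) + m<a,b> delta_{m+n,0} l, and a(n)u = 0 for n >> 0.\<close>
definition weak_affine_module ::
  "(complex \<Rightarrow> 'm::ab_group_add \<Rightarrow> 'm) \<Rightarrow> complex \<Rightarrow> (sl2 \<Rightarrow> int \<Rightarrow> 'm \<Rightarrow> 'm) \<Rightarrow> bool" where
  "weak_affine_module scale l act \<longleftrightarrow>
     vector_space scale \<and>
     (\<forall>a n. Vector_Spaces.linear scale scale (act a n)) \<and>
     (\<forall>a b m n u. act a m (act b n u) - act b n (act a m u) =
          bracket_act scale act a b (m + n) u
          + scale (of_int m * sl2_form a b * (if m + n = 0 then 1 else 0) * l) u) \<and>
     (\<forall>a u. \<exists>N. \<forall>n\<ge>N. act a n u = 0)"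

text \<open>A word [(b1,n1),...,(bk,nk)] (all ni \<ge> 1) represents the spanning vector
  b1(-n1) ... bk(-nk) 1 of V(l,C).  vmode act w m is the mode v_m of the vertex
  operator Y(v,x) = sum_m v_m x^(-m-1) acting on the module, defined recursively
  by the iterate formula
  (b(-n)v)_m = sum_{i\<ge>0} (-1)^i binom(-n,i) ( b(-n-i) v_{m+i} - (-1)^n v_{m-n-i} b(i) ),
  where (-1)^i binom(-n,i) = binom(n-1+i,i); the sum is finite on each vector.\<close>
primrec vmode :: "(complex \<Rightarrow> 'm::ab_group_add \<Rightarrow> 'm) \<Rightarrow> (sl2 \<Rightarrow> int \<Rightarrow> 'm \<Rightarrow> 'm)
     \<Rightarrow> (sl2 \<times> nat) list \<Rightarrow> int \<Rightarrow> 'm \<Rightarrow> 'm" where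
  "vmode scale act [] m u = (if m = -1 then u else 0)"
| "vmode scale act (p # w) m u =
     Sum_any (\<lambda>i::nat. scale (of_nat ((snd p - 1 + i) choose i))
        (act (fst p) (- int (snd p) - int i) (vmode scale act w (m + int i) u)
         - scale ((-1) ^ snd p) (vmode scale act w (m - int (snd p) - int i) (act (fst p) (int i) u))))"

text \<open>L_z(0)-weights: wt e(-n) = n - z, wt f(-n) = n + z, wt h(-n) = n; words are homogeneous.\<close>
fun gen_shift :: "rat \<Rightarrow> sl2 \<Rightarrow> rat" where
  "gen_shift z E = - z"
| "gen_shift z F = z"
| "gen_shift z H = 0"

definition word_wt :: "rat \<Rightarrow> (sl2 \<times> nat) list \<Rightarrow> rat" where
  "word_wt z w = (\<Sum>p\<leftarrow>w. of_nat (snd p) + gen_shift z (fst p))"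

definition eps_wt :: "rat \<Rightarrow> int" where
  "eps_wt r = (if r \<in> \<int> then 1 else 0)"

text \<open>Res_x (1+x)^[wt a] / x^(1+eps(a)) Y(a,x) u
   = sum_{j=0}^{[wt a]} binom([wt a],j) a_{j-1-eps(a)} u  (weights are \<ge> 0 here).\<close>
definition res_elem :: "(complex \<Rightarrow> 'm::ab_group_add \<Rightarrow> 'm) \<Rightarrow> (sl2 \<Rightarrow> int \<Rightarrow> 'm \<Rightarrow> 'm)
     \<Rightarrow> rat \<Rightarrow> (sl2 \<times> nat) list \<Rightarrow> 'm \<Rightarrow> 'm" where
  "res_elem scale act z w u =
     (let K = nat \<lfloor>word_wt z w\<rfloor>; ep = eps_wt (word_wt z w) in
      \<Sum>j\<le>K. scale (of_nat (K choose j)) (vmode scale act w (int j - 1 - ep) u))"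

text \<open>O(M): span of the residues over homogeneous a (equivalently over the homogeneous
  spanning words, since the expression is linear in a of fixed weight) and u in M.\<close>
definition O_space :: "(complex \<Rightarrow> 'm::ab_group_add \<Rightarrow> 'm) \<Rightarrow> (sl2 \<Rightarrow> int \<Rightarrow> 'm \<Rightarrow> 'm)
     \<Rightarrow> rat \<Rightarrow> 'm set" where
  "O_space scale act z = module.span scale
     {res_elem scale act z w u | w u. \<forall>p\<in>set w. 1 \<le> snd p}"

end

theory Submission imports Defs "HOL-Computational_Algebra.Formal_Power_Series" begin

lemma bound_family:
  fixes P :: "nat \<Rightarrow> int \<Rightarrow> bool"
  assumes "\<And>i. i < N \<Longrightarrow> \<exists>T. \<forall>k\<ge>T. P i k"
  shows "\<exists>T. \<forall>i<N. \<forall>k\<ge>T. P i k"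
  using assms
proof (induction N)
  case 0 then show ?case by auto
next
  case (Suc N)
  obtain T1 where T1: "\<forall>i<N. \<forall>k\<ge>T1. P i k" using Suc by auto
  obtain T2 where T2: "\<forall>k\<ge>T2. P N k" using Suc.prems by auto
  show ?case
    by (rule exI[of _ "max T1 T2"]) (metis T1 T2 less_Suc_eq max.boundedE)
qed

lemma coef_L2:
  assumes "n \<ge> 1"
  shows "(\<Sum>i\<le>t. (-1)^i * of_nat ((n - 1 + i) choose i) * of_nat ((A + n) choose (t - i)))
         = (of_nat (A choose t) :: complex)"
proof -
  have "(\<Sum>k\<in>{0..t}. ((- of_nat n :: complex) gchoose k) * (of_nat (A + n) gchoose (t - k)))
        = (- of_nat n + of_nat (A + n)) gchoose t"
    by (rule gbinomial_Vandermonde)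
  moreover have "(- of_nat n + of_nat (A + n) :: complex) = of_nat A" by simp
  moreover have "((- of_nat n :: complex) gchoose k) = (-1)^k * of_nat ((n - 1 + k) choose k)" for k
  proof -
    have e: "(of_nat n + of_nat k - 1 :: complex) = of_nat (n - 1 + k)" using assms by (simp add: of_nat_diff)
    have "((- of_nat n :: complex) gchoose k) = (-1)^k * ((of_nat n + of_nat k - 1) gchoose k)"
      by (rule gbinomial_minus)
    also have "\<dots> = (-1)^k * (of_nat (n - 1 + k) gchoose k)" by (simp only: e)
    finally show ?thesis by (simp add: binomial_gbinomial)
  qed
  ultimately show ?thesis
    by (simp add: binomial_gbinomial atMost_atLeast0 mult.assoc)
qed

lemma coef_L1:
  "(\<Sum>i\<le>t. of_nat (r choose i) * of_nat (A choose (t - i))) = (of_nat ((r + A) choose t) :: complex)"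
proof -
  have "(\<Sum>i\<le>t. (r choose i) * (A choose (t - i))) = (r + A) choose t" by (rule vandermonde)
  then have "of_nat (\<Sum>i\<le>t. (r choose i) * (A choose (t - i))) = (of_nat ((r + A) choose t) :: complex)"
    by simp
  then show ?thesis by simp
qed

fun f0w :: "(sl2 \<times> nat) list \<Rightarrow> (complex \<times> (sl2 \<times> nat) list) list" where
  "f0w [] = []"
| "f0w ((b, n) # c) = (case b of E \<Rightarrow> [(-1, (H, n) # c)] | H \<Rightarrow> [(2, (F, n) # c)] | F \<Rightarrow> [])
      @ map (\<lambda>(\<alpha>, w). (\<alpha>, (b, n) # w)) (f0w c)"

lemma sum_list_swap:
  "(\<Sum>i\<in>A. \<Sum>x\<leftarrow>L. g i x) = (\<Sum>x\<leftarrow>L. \<Sum>i\<in>A. (g i x :: 'a::comm_monoid_add))"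
  by (induction L) (simp_all add: sum.distrib)

lemma floorE1: fixes r z :: rat assumes "0 < z" "z < 1" "n \<ge> 1" shows "\<lfloor>r\<rfloor> \<le> int n + \<lfloor>r - z\<rfloor>"
proof -
  have "\<lfloor>r - 1\<rfloor> \<le> \<lfloor>r - z\<rfloor>" using assms by (intro floor_mono) simp
  moreover have "\<lfloor>r - 1\<rfloor> = \<lfloor>r\<rfloor> - 1" by (metis floor_diff_one)
  ultimately show ?thesis using assms by linarith
qed
lemma floorE2: fixes r z :: rat assumes "0 < z" "z < 1" shows "\<lfloor>r - z\<rfloor> - \<lfloor>r\<rfloor> + eps_wt r \<le> 0"
proof (cases "r \<in> \<int>")
  case True
  then obtain m where m: "r = of_int m" by (auto elim: Ints_cases)
  have "\<lfloor>r - z\<rfloor> = m - 1" unfolding m using assms by (simp add: floor_eq_iff)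
  then show ?thesis using True m by (simp add: eps_wt_def)
next
  case False
  have "\<lfloor>r - z\<rfloor> \<le> \<lfloor>r\<rfloor>" using assms by (intro floor_mono) simp
  then show ?thesis using False by (simp add: eps_wt_def)
qed
lemma floorF1: fixes r z :: rat assumes "0 < z" shows "\<lfloor>r\<rfloor> \<le> \<lfloor>r + z\<rfloor>"
  using assms by (intro floor_mono) simp
lemma floorF2: fixes r z :: rat assumes "0 < z" "z < 1" shows "\<lfloor>r + z\<rfloor> - \<lfloor>r\<rfloor> + eps_wt r \<le> 1"
proof (cases "r \<in> \<int>")
  case True
  then obtain m where m: "r = of_int m" by (auto elim: Ints_cases)
  have "\<lfloor>r + z\<rfloor> = m" unfolding m using assms by (simp add: floor_eq_iff)
  then show ?thesis using True m by (simp add: eps_wt_def)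
next
  case False
  have "\<lfloor>r + z\<rfloor> \<le> \<lfloor>r + 1\<rfloor>" using assms by (intro floor_mono) simp
  then show ?thesis using False by (simp add: eps_wt_def)
qed
lemma eps_nat: "eps_wt (of_nat n + x) = eps_wt x"
proof -
  have "(of_nat n + x \<in> \<int>) = (x \<in> \<int>)"
    by (metis Ints_add Ints_diff Ints_of_nat add_diff_cancel_left')
  then show ?thesis by (simp add: eps_wt_def)
qed
lemma eps_ge0: "0 \<le> eps_wt x" by (simp add: eps_wt_def)
lemma floor_nat: "\<lfloor>(of_nat n + x :: rat)\<rfloor> = int n + \<lfloor>x\<rfloor>"
  by (metis add.commute floor_add_int of_int_of_nat_eq)

locale wam = vector_space scale for scale :: "complex \<Rightarrow> 'm::ab_group_add \<Rightarrow> 'm" +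
  fixes act :: "sl2 \<Rightarrow> int \<Rightarrow> 'm \<Rightarrow> 'm" and l :: complex
  assumes lin_act: "Vector_Spaces.linear scale scale (act a n)"
  and comm: "act a m (act b n u) - act b n (act a m u) =
          bracket_act scale act a b (m + n) u
          + scale (of_int m * sl2_form a b * (if m + n = 0 then 1 else 0) * l) u"
  and trunc: "\<exists>N. \<forall>n\<ge>N. act a n u = 0"
begin

interpretation vsp: vector_space_pair scale scale ..

lemma act_add: "act a n (x + y) = act a n x + act a n y"
  using lin_act vsp.linear_add by blast
lemma act_scale: "act a n (scale c x) = scale c (act a n x)"
  using lin_act vsp.linear_scale by blast
lemma act_diff: "act a n (x - y) = act a n x - act a n y"
  using lin_act vsp.linear_diff by blast
lemma act_zero[simp]: "act a n 0 = 0"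
  using lin_act vsp.linear_0 by blast
lemma act_sum: "act a n (sum g A) = (\<Sum>x\<in>A. act a n (g x))"
  using lin_act vsp.linear_sum by blast

lemma comm': "act a m (act b n u) = act b n (act a m u) +
          bracket_act scale act a b (m + n) u
          + scale (of_int m * sl2_form a b * (if m + n = 0 then 1 else 0) * l) u"
  using comm[of a m b n u] by (simp add: algebra_simps)

lemma comm_HF: "act H p (act F k u) = act F k (act H p u) + scale (-2) (act F (p + k) u)"
  using comm'[of H p F k u] by simp
lemma comm_HE: "act H p (act E k u) = act E k (act H p u) + scale 2 (act E (p + k) u)"
  using comm'[of H p E k u] by simp
lemma comm_HH: "act H p (act H k u) = act H k (act H p u) + scale (of_int p * 2 * (if p + k = 0 then 1 else 0) * l) u"
  using comm'[of H p H k u] by simp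
lemma comm0: "act a 0 (act b k u) = act b k (act a 0 u) + bracket_act scale act a b k u"
  using comm'[of a 0 b k u] by simp

lemma trunc_all: "\<exists>N::nat. \<forall>b. \<forall>n\<ge>N. act b (int n) u = 0"
proof -
  obtain N1 where N1: "\<forall>n\<ge>N1. act E n u = 0" using trunc by blast
  obtain N2 where N2: "\<forall>n\<ge>N2. act F n u = 0" using trunc by blast
  obtain N3 where N3: "\<forall>n\<ge>N3. act H n u = 0" using trunc by blast
  show ?thesis
  proof (rule exI[of _ "nat (max N1 (max N2 N3))"], intro allI impI)
    fix b n assume "nat (max N1 (max N2 N3)) \<le> n"
    then show "act b (int n) u = 0" using N1 N2 N3 by (cases b) auto
  qed
qed

abbreviation vm where "vm \<equiv> vmode scale act"

definition summ :: "sl2 \<Rightarrow> nat \<Rightarrow> (sl2 \<times> nat) list \<Rightarrow> int \<Rightarrow> 'm \<Rightarrow> nat \<Rightarrow> 'm" where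
  "summ b n w k u i = scale (of_nat ((n - 1 + i) choose i))
        (act b (- int n - int i) (vm w (k + int i) u)
         - scale ((-1) ^ n) (vm w (k - int n - int i) (act b (int i) u)))"

definition good :: "(sl2 \<times> nat) list \<Rightarrow> int \<Rightarrow> 'm \<Rightarrow> nat \<Rightarrow> bool" where
  "good w k u S \<longleftrightarrow> (\<forall>i\<ge>S. vm w (k + int i) u = 0) \<and> (\<forall>b i. i \<ge> S \<longrightarrow> act b (int i) u = 0)"

lemma good_mono: "good w k u S \<Longrightarrow> S \<le> S' \<Longrightarrow> k \<le> k' \<Longrightarrow> good w k' u S'"
  unfolding good_def
proof (intro conjI allI impI, goal_cases)
  case (1 i)
  then have "k' + int i = k + int (i + nat (k' - k))" by simp
  then show ?case using 1 by (metis le_add1 order.trans)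
next
  case (2 b i) then show ?case by auto
qed

lemma vm_cons_sum:
  assumes "good w k u S" and "\<And>j. vm w j 0 = 0" 
  shows "vm ((b,n)#w) k u = (\<Sum>i<S. summ b n w k u i)"
proof -
  have "{i. summ b n w k u i \<noteq> 0} \<subseteq> {..<S}"
  proof
    fix i assume "i \<in> {i. summ b n w k u i \<noteq> 0}"
    then have "summ b n w k u i \<noteq> 0" by simp
    moreover have "i \<ge> S \<Longrightarrow> summ b n w k u i = 0"
      using assms unfolding good_def summ_def by simp
    ultimately show "i \<in> {..<S}" by force
  qed
  then show ?thesis
    by (simp add: Sum_any.expand_superset[of "{..<S}"] summ_def)
qed

lemma summ_add:
  assumes "\<And>k x y. vm w k (x + y) = vm w k x + vm w k y"
  shows "summ b n w k (x + y) i = summ b n w k x i + summ b n w k y i"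
  unfolding summ_def using assms
  by (simp add: act_add scale_right_distrib scale_right_diff_distrib algebra_simps)

lemma summ_scale:
  assumes "\<And>k c x. vm w k (scale c x) = scale c (vm w k x)"
  shows "summ b n w k (scale c x) i = scale c (summ b n w k x i)"
  unfolding summ_def using assms
  by (simp add: act_scale scale_right_diff_distrib scale_left_commute mult_ac)

lemma good_ex:
  assumes "\<exists>T. \<forall>k\<ge>T. vm w k u = 0"
  shows "\<exists>S. good w k u S"
proof -
  obtain T where T: "\<forall>k\<ge>T. vm w k u = 0" using assms by blast
  obtain N where N: "\<forall>b. \<forall>n\<ge>N. act b (int n) u = 0" using trunc_all by blast
  show ?thesis
    by (rule exI[of _ "max (nat (T - k)) N"]) (auto simp: good_def T N)
qed

lemma vm_basic:
  "(\<forall>k x y. vm w k (x + y) = vm w k x + vm w k y) \<and>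
   (\<forall>k c x. vm w k (scale c x) = scale c (vm w k x)) \<and>
   (\<forall>u. \<exists>T. \<forall>k\<ge>T. vm w k u = 0)"
proof (induction w)
  case Nil
  have "\<exists>T. \<forall>k\<ge>T. vm [] k u = 0" for u by (rule exI[of _ 0]) simp
  then show ?case by auto
next
  case (Cons p w)
  obtain b n where p: "p = (b, n)" by (cases p)
  have add: "\<And>k x y. vm w k (x + y) = vm w k x + vm w k y"
    and sc: "\<And>k c x. vm w k (scale c x) = scale c (vm w k x)"
    and tr: "\<And>u. \<exists>T. \<forall>k\<ge>T. vm w k u = 0" using Cons.IH by auto
  have z: "\<And>j. vm w j 0 = 0" using sc[of _ 0 0] by simp
  have A: "vm (p # w) k (x + y) = vm (p # w) k x + vm (p # w) k y" for k x y
  proof -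
    obtain S1 where S1: "good w k x S1" using good_ex tr by blast
    obtain S2 where S2: "good w k y S2" using good_ex tr by blast
    obtain S3 where S3: "good w k (x + y) S3" using good_ex tr by blast
    let ?S = "max S1 (max S2 S3)"
    have g1: "good w k x ?S" "good w k y ?S" "good w k (x + y) ?S"
      using good_mono S1 S2 S3 by auto
    show ?thesis
      unfolding p vm_cons_sum[OF g1(1) z] vm_cons_sum[OF g1(2) z] vm_cons_sum[OF g1(3) z]
      by (simp add: summ_add[OF add] sum.distrib)
  qed
  have B: "vm (p # w) k (scale c x) = scale c (vm (p # w) k x)" for k c x
  proof -
    obtain S1 where S1: "good w k x S1" using good_ex tr by blast
    obtain S3 where S3: "good w k (scale c x) S3" using good_ex tr by blast
    let ?S = "max S1 S3"
    have g1: "good w k x ?S" "good w k (scale c x) ?S"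
      using good_mono S1 S3 by auto
    show ?thesis
      unfolding p vm_cons_sum[OF g1(1) z] vm_cons_sum[OF g1(2) z]
      by (simp add: summ_scale[OF sc] scale_sum_right)
  qed
  have C: "\<exists>T. \<forall>k\<ge>T. vm (p # w) k u = 0" for u
  proof -
    obtain N where N: "\<forall>b. \<forall>n\<ge>N. act b (int n) u = 0" using trunc_all by blast
    obtain T0 where T0: "\<forall>k\<ge>T0. vm w k u = 0" using tr by blast
    obtain T1 where T1: "\<forall>i<N. \<forall>k\<ge>T1. vm w k (act b (int i) u) = 0"
      using bound_family[of N "\<lambda>i k. vm w k (act b (int i) u) = 0"] tr by blast
    show ?thesis
    proof (rule exI[of _ "max T0 (T1 + int n + int N)"], intro allI impI)
      fix k assume k: "max T0 (T1 + int n + int N) \<le> k"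
      have g: "good w k u N" unfolding good_def using N T0 k by auto
      have "summ b n w k u i = 0" if "i < N" for i
        unfolding summ_def using T0 T1 k that by auto
      then show "vm (p # w) k u = 0"
        unfolding p vm_cons_sum[OF g z] by simp
    qed
  qed
  show ?case using A B C by blast
qed

lemma vm_add: "vm w k (x + y) = vm w k x + vm w k y" using vm_basic by blast
lemma vm_scale: "vm w k (scale c x) = scale c (vm w k x)" using vm_basic by blast
lemma vm_trunc: "\<exists>T. \<forall>k\<ge>T. vm w k u = 0" using vm_basic by blast
lemma vm_zero[simp]: "vm w k 0 = 0" using vm_scale[of w k 0 0] by simp
lemma vm_neg: "vm w k (- x) = - vm w k x"
  using vm_scale[of w k "-1" x] by simp
lemma vm_diff: "vm w k (x - y) = vm w k x - vm w k y"
  using vm_add[of w k "x - y" y] by (simp add: algebra_simps)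
lemma vm_sum: "vm w k (sum g A) = (\<Sum>x\<in>A. vm w k (g x))"
  by (induction A rule: infinite_finite_induct) (auto simp: vm_add)
lemma good_ex': "\<exists>S. good w k u S" using good_ex vm_trunc by blast
lemma vm_cons: "good w k u S \<Longrightarrow> vm ((b,n)#w) k u = (\<Sum>i<S. summ b n w k u i)"
  using vm_cons_sum by simp

definition RR :: "(sl2 \<times> nat) list \<Rightarrow> nat \<Rightarrow> int \<Rightarrow> 'm \<Rightarrow> 'm" where
  "RR w A B u = (\<Sum>j\<le>A. scale (of_nat (A choose j)) (vm w (int j + B) u))"

lemma RR_ext:
  assumes "\<forall>t\<ge>S. vm w (B + int t) u = 0"
  shows "RR w A B u = (\<Sum>t<S. scale (of_nat (A choose t)) (vm w (B + int t) u))"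
proof -
  let ?g = "\<lambda>t. scale (of_nat (A choose t)) (vm w (B + int t) u)"
  let ?M = "max S (Suc A)"
  have "RR w A B u = (\<Sum>t<Suc A. ?g t)"
    unfolding RR_def lessThan_Suc_atMost by (simp add: add.commute)
  also have "\<dots> = (\<Sum>t<?M. ?g t)"
    by (rule sum.mono_neutral_left) auto
  also have "\<dots> = (\<Sum>t<S. ?g t)"
    by (rule sum.mono_neutral_right) (use assms in auto)
  finally show ?thesis .
qed

lemma DS:
  fixes f g :: "nat \<Rightarrow> complex" and h :: "nat \<Rightarrow> 'm"
  assumes h0: "\<forall>t\<ge>S. h t = 0"
  shows "(\<Sum>i<S. scale (f i) (\<Sum>j\<le>A. scale (g j) (h (i + j))))
       = (\<Sum>t<S. scale (\<Sum>i\<le>t. f i * (if t - i \<le> A then g (t - i) else 0)) (h t))"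
proof -
  let ?g' = "\<lambda>j. if j \<le> A then g j else 0"
  let ?P = "{(i, j). i + j < S \<and> j \<le> A}"
  have fin: "finite {(i, j). i + j < (S::nat)}"
    by (rule finite_subset[of _ "{..<S} \<times> {..<S}"]) auto
  have "(\<Sum>i<S. scale (f i) (\<Sum>j\<le>A. scale (g j) (h (i + j))))
      = (\<Sum>i<S. \<Sum>j\<le>A. scale (f i * g j) (h (i + j)))"
    by (simp add: scale_sum_right)
  also have "\<dots> = (\<Sum>(i,j)\<in>{..<S} \<times> {..A}. scale (f i * g j) (h (i + j)))"
    by (simp add: sum.cartesian_product)
  also have "\<dots> = (\<Sum>(i,j)\<in>?P. scale (f i * g j) (h (i + j)))"
    by (rule sum.mono_neutral_right) (use h0 in \<open>auto, metis not_less\<close>)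
  also have "\<dots> = (\<Sum>(i,j)\<in>{(i, j). i + j < S}. scale (f i * ?g' j) (h (i + j)))"
    by (rule sum.mono_neutral_cong_left) (use fin in \<open>auto split: if_splits\<close>)
  also have "\<dots> = (\<Sum>t<S. \<Sum>i\<le>t. scale (f i * ?g' (t - i)) (h (i + (t - i))))"
    by (rule sum.triangle_reindex)
  also have "\<dots> = (\<Sum>t<S. scale (\<Sum>i\<le>t. f i * ?g' (t - i)) (h t))"
    by (simp add: scale_sum_left)
  finally show ?thesis by simp
qed

lemma RR_shift: "RR w A (B + int i) u = (\<Sum>j\<le>A. scale (of_nat (A choose j)) (vm w (B + int (i + j)) u))"
  unfolding RR_def by (simp add: algebra_simps)

lemma L1: "RR c (A + r) B v = (\<Sum>j\<le>r. scale (of_nat (r choose j)) (RR c A (B + int j) v))"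
proof -
  obtain T where T: "\<forall>k\<ge>T. vm c k v = 0" using vm_trunc by blast
  define S where "S = max (nat (T - B)) (Suc (A + r))"
  have h0: "\<forall>t\<ge>S. vm c (B + int t) v = 0" using T unfolding S_def by auto
  have "(\<Sum>j\<le>r. scale (of_nat (r choose j)) (RR c A (B + int j) v))
      = (\<Sum>j<S. scale (of_nat (r choose j)) (RR c A (B + int j) v))"
    by (rule sum.mono_neutral_cong_left) (auto simp: S_def)
  also have "\<dots> = (\<Sum>j<S. scale (of_nat (r choose j)) (\<Sum>j'\<le>A. scale (of_nat (A choose j')) (vm c (B + int (j + j')) v)))"
    by (simp add: RR_shift)
  also have "\<dots> = (\<Sum>t<S. scale (\<Sum>i\<le>t. of_nat (r choose i) * (if t - i \<le> A then of_nat (A choose (t - i)) else 0)) (vm c (B + int t) v))"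
    by (rule DS[where h="\<lambda>t. vm c (B + int t) v"]) (use h0 in auto)
  also have "\<dots> = (\<Sum>t<S. scale (of_nat ((r + A) choose t)) (vm c (B + int t) v))"
  proof (rule sum.cong[OF refl])
    fix t
    have "(\<Sum>i\<le>t. of_nat (r choose i) * (if t - i \<le> A then of_nat (A choose (t - i)) else 0))
        = (\<Sum>i\<le>t. of_nat (r choose i) * (of_nat (A choose (t - i)) :: complex))"
      by (rule sum.cong) auto
    then show "scale (\<Sum>i\<le>t. of_nat (r choose i) * (if t - i \<le> A then of_nat (A choose (t - i)) else 0)) (vm c (B + int t) v)
        = scale (of_nat ((r + A) choose t)) (vm c (B + int t) v)"
      by (simp add: coef_L1)
  qed
  also have "\<dots> = RR c (A + r) B v"
    using RR_ext[OF h0, of "A + r"] by (simp add: add.commute)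
  finally show ?thesis by simp
qed

lemma L2:
  assumes h0: "\<forall>t\<ge>S. vm c (B + int t) u = 0" and n: "n \<ge> 1"
  shows "(\<Sum>i<S. scale ((-1)^i * of_nat ((n - 1 + i) choose i)) (RR c (A + n) (B + int i) u)) = RR c A B u"
proof -
  have "(\<Sum>i<S. scale ((-1)^i * of_nat ((n - 1 + i) choose i)) (RR c (A + n) (B + int i) u))
      = (\<Sum>i<S. scale ((-1)^i * of_nat ((n - 1 + i) choose i)) (\<Sum>j\<le>A + n. scale (of_nat ((A + n) choose j)) (vm c (B + int (i + j)) u)))"
    by (simp add: RR_shift)
  also have "\<dots> = (\<Sum>t<S. scale (\<Sum>i\<le>t. (-1)^i * of_nat ((n - 1 + i) choose i) * (if t - i \<le> A + n then of_nat ((A + n) choose (t - i)) else 0)) (vm c (B + int t) u))"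
    by (rule DS[where h="\<lambda>t. vm c (B + int t) u"]) (use h0 in auto)
  also have "\<dots> = (\<Sum>t<S. scale (of_nat (A choose t)) (vm c (B + int t) u))"
  proof (rule sum.cong[OF refl])
    fix t
    have "(\<Sum>i\<le>t. (-1)^i * of_nat ((n - 1 + i) choose i) * (if t - i \<le> A + n then of_nat ((A + n) choose (t - i)) else 0))
        = (\<Sum>i\<le>t. (-1)^i * of_nat ((n - 1 + i) choose i) * (of_nat ((A + n) choose (t - i)) :: complex))"
      by (rule sum.cong) auto
    then show "scale (\<Sum>i\<le>t. (-1)^i * of_nat ((n - 1 + i) choose i) * (if t - i \<le> A + n then of_nat ((A + n) choose (t - i)) else 0)) (vm c (B + int t) u)
        = scale (of_nat (A choose t)) (vm c (B + int t) u)"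
      using coef_L2[OF n, where t=t and A=A] by simp
  qed
  also have "\<dots> = RR c A B u"
    using RR_ext[OF h0, of A] by simp
  finally show ?thesis .
qed

definition Wset :: "'m set" where
  "Wset = span ({act F (- m) u + act F (1 - m) u | m u. m > 0}
      \<union> {act E (- m) u | m u. m > 0}
      \<union> {act H (- m - 1) u + act H (- m) u | m u. m > 0})"

lemma W_F: "0 < m \<Longrightarrow> act F (- m) u + act F (1 - m) u \<in> Wset"
  unfolding Wset_def by (rule span_base) blast
lemma W_E: "0 < m \<Longrightarrow> act E (- m) u \<in> Wset"
  unfolding Wset_def by (rule span_base) blast
lemma W_H: "0 < m \<Longrightarrow> act H (- m - 1) u + act H (- m) u \<in> Wset"
  unfolding Wset_def by (rule span_base) blast

lemma W_add: "x \<in> Wset \<Longrightarrow> y \<in> Wset \<Longrightarrow> x + y \<in> Wset"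
  unfolding Wset_def by (rule span_add)
lemma W_diff: "x \<in> Wset \<Longrightarrow> y \<in> Wset \<Longrightarrow> x - y \<in> Wset"
  unfolding Wset_def by (rule span_diff)
lemma W_scale: "x \<in> Wset \<Longrightarrow> scale c x \<in> Wset"
  unfolding Wset_def by (rule span_scale)
lemma W_zero: "0 \<in> Wset"
  unfolding Wset_def by (rule span_zero)
lemma W_sum: "(\<And>x. x \<in> A \<Longrightarrow> f x \<in> Wset) \<Longrightarrow> sum f A \<in> Wset"
  unfolding Wset_def by (rule span_sum)
lemma W_neg: "x \<in> Wset \<Longrightarrow> - x \<in> Wset"
  unfolding Wset_def by (rule span_neg)

lemma cong_f: "act F (- int p) v - scale ((-1)^p) (act F 0 v) \<in> Wset"
proof (induction p)
  case 0 then show ?case by (simp add: W_zero)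
next
  case (Suc p)
  have g: "act F (- int (Suc p)) v + act F (1 - int (Suc p)) v \<in> Wset" by (rule W_F) simp
  have "act F (- int (Suc p)) v - scale ((-1)^Suc p) (act F 0 v)
     = (act F (- int (Suc p)) v + act F (1 - int (Suc p)) v) - (act F (- int p) v - scale ((-1)^p) (act F 0 v))"
    by (simp add: algebra_simps)
  then show ?case using W_diff[OF g Suc.IH] by simp
qed

lemma cong_h: "act H (- int (Suc q)) v - scale ((-1)^q) (act H (-1) v) \<in> Wset"
proof (induction q)
  case 0 then show ?case by (simp add: W_zero)
next
  case (Suc q)
  have g: "act H (- int (Suc q) - 1) v + act H (- int (Suc q)) v \<in> Wset" by (rule W_H) simp
  have "act H (- int (Suc (Suc q))) v - scale ((-1)^Suc q) (act H (-1) v)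
     = (act H (- int (Suc q) - 1) v + act H (- int (Suc q)) v) - (act H (- int (Suc q)) v - scale ((-1)^q) (act H (-1) v))"
    by (simp add: algebra_simps)
  then show ?case using W_diff[OF g Suc.IH] by simp
qed

lemma h_pres: assumes "x \<in> Wset" shows "act H (-1) x \<in> Wset"
proof -
  have sub: "subspace {x. act H (-1) x \<in> Wset}"
    unfolding subspace_def
    by (auto simp: act_add act_scale W_add W_scale W_zero)
  have base: "act H (-1) x \<in> Wset" if hx: "x \<in> {act F (- m) u + act F (1 - m) u | m u. m > 0}
      \<union> {act E (- m) u | m u. m > 0}
      \<union> {act H (- m - 1) u + act H (- m) u | m u. m > 0}" for x
  proof -
    consider (f) m u where "m > 0" "x = act F (- m) u + act F (1 - m) u"
      | (e) m u where "m > 0" "x = act E (- m) u"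
      | (h) m u where "m > 0" "x = act H (- m - 1) u + act H (- m) u"
      using hx by blast
    then show ?thesis
    proof cases
      case f
      have "act H (-1) x = (act F (- m) (act H (-1) u) + act F (1 - m) (act H (-1) u))
              + scale (-2) (act F (- (m + 1)) u + act F (1 - (m + 1)) u)"
        using f by (simp add: comm_HF act_add scale_right_distrib algebra_simps)
      moreover have "act F (- m) (act H (-1) u) + act F (1 - m) (act H (-1) u) \<in> Wset"
        using f by (intro W_F) simp
      moreover have "act F (- (m + 1)) u + act F (1 - (m + 1)) u \<in> Wset"
        using f by (intro W_F) simp
      ultimately show ?thesis by (simp add: W_add W_scale W_diff)
    next
      case e
      have "act H (-1) x = act E (- m) (act H (-1) u) + scale 2 (act E (- (m + 1)) u)"
        using e by (simp add: comm_HE algebra_simps)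
      moreover have "act E (- m) (act H (-1) u) \<in> Wset" using e by (intro W_E) simp
      moreover have "act E (- (m + 1)) u \<in> Wset" using e by (intro W_E) simp
      ultimately show ?thesis by (simp add: W_add W_scale)
    next
      case h
      have "act H (-1) x = act H (- m - 1) (act H (-1) u) + act H (- m) (act H (-1) u)"
        using h comm_HH[of "-1" "- m - 1" u] comm_HH[of "-1" "- m" u] by (simp add: act_add algebra_simps)
      moreover have "act H (- m - 1) (act H (-1) u) + act H (- m) (act H (-1) u) \<in> Wset"
        using h by (intro W_H) simp
      ultimately show ?thesis by simp
    qed
  qed
  show ?thesis
    using assms unfolding Wset_def
    by (induction rule: span_induct) (use sub base in \<open>auto simp: Wset_def\<close>)
qed

lemma act_sum_list: "act a n (\<Sum>x\<leftarrow>L. g x) = (\<Sum>x\<leftarrow>L. act a n (g x))"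
  by (induction L) (simp_all add: act_add)
lemma vm_sum_list: "vm w k (\<Sum>x\<leftarrow>L. g x) = (\<Sum>x\<leftarrow>L. vm w k (g x))"
  by (induction L) (simp_all add: vm_add)
lemma scale_sum_list: "scale c (\<Sum>x\<leftarrow>L. g x) = (\<Sum>x\<leftarrow>L. scale c (g x))"
  by (induction L) (simp_all add: scale_right_distrib)
lemma W_sum_list: "(\<And>x. x \<in> set L \<Longrightarrow> g x \<in> Wset) \<Longrightarrow> (\<Sum>x\<leftarrow>L. g x) \<in> Wset"
  by (induction L) (simp_all add: W_add W_zero)

lemma good_list: "\<exists>S. \<forall>x\<in>set L. good (snd x) k u S"
proof (induction L)
  case Nil then show ?case by simp
next
  case (Cons a L)
  obtain S1 where S1: "\<forall>x\<in>set L. good (snd x) k u S1" using Cons by blast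
  obtain S2 where S2: "good (snd a) k u S2" using good_ex' by blast
  show ?case
    by (rule exI[of _ "max S1 S2"]) (use S1 S2 good_mono in \<open>auto\<close>)
qed

lemma f0_step:
  assumes IH: "\<And>k u. act F 0 (vm c k u) = vm c k (act F 0 u) + (\<Sum>(\<alpha>, w)\<leftarrow>f0w c. scale \<alpha> (vm w k u))"
  shows "act F 0 (summ b n c k u i) = summ b n c k (act F 0 u) i
     + scale (of_nat ((n - 1 + i) choose i))
        (bracket_act scale act F b (- int n - int i) (vm c (k + int i) u)
         - scale ((-1) ^ n) (vm c (k - int n - int i) (bracket_act scale act F b (int i) u)))
     + (\<Sum>(\<alpha>, w)\<leftarrow>f0w c. scale \<alpha> (summ b n w k u i))"
proof -
  let ?C = "of_nat ((n - 1 + i) choose i) :: complex"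
  let ?s = "(-1) ^ n :: complex"
  let ?p = "- int n - int i" and ?k1 = "k + int i" and ?k2 = "k - int n - int i"
  have e1: "act F 0 (act b ?p (vm c ?k1 u)) = act b ?p (vm c ?k1 (act F 0 u))
      + (\<Sum>(\<alpha>, w)\<leftarrow>f0w c. scale \<alpha> (act b ?p (vm w ?k1 u)))
      + bracket_act scale act F b ?p (vm c ?k1 u)"
    by (simp add: comm0 IH act_add act_sum_list act_scale case_prod_unfold)
  have e2: "act F 0 (vm c ?k2 (act b (int i) u)) = vm c ?k2 (act b (int i) (act F 0 u))
      + vm c ?k2 (bracket_act scale act F b (int i) u)
      + (\<Sum>(\<alpha>, w)\<leftarrow>f0w c. scale \<alpha> (vm w ?k2 (act b (int i) u)))"
    by (simp add: comm0 IH vm_add)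
  have e3: "(\<Sum>(\<alpha>, w)\<leftarrow>f0w c. scale \<alpha> (summ b n w k u i))
     = scale ?C ((\<Sum>(\<alpha>, w)\<leftarrow>f0w c. scale \<alpha> (act b ?p (vm w ?k1 u)))
        - scale ?s (\<Sum>(\<alpha>, w)\<leftarrow>f0w c. scale \<alpha> (vm w ?k2 (act b (int i) u))))"
    unfolding summ_def
    by (simp add: scale_sum_list case_prod_unfold scale_right_diff_distrib sum_list_subtractf scale_left_commute mult_ac)
  show ?thesis
    unfolding e3 unfolding summ_def act_scale act_diff e1 e2
    by (simp add: scale_right_diff_distrib scale_right_distrib algebra_simps)
qed

lemma comm_f0:
  "act F 0 (vm c k u) = vm c k (act F 0 u) + (\<Sum>(\<alpha>, w)\<leftarrow>f0w c. scale \<alpha> (vm w k u))"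
proof (induction c arbitrary: k u)
  case Nil then show ?case by simp
next
  case (Cons p c)
  obtain b n where p: "p = (b, n)" by (cases p)
  obtain S1 where S1: "good c k u S1" using good_ex' by blast
  obtain S2 where S2: "good c k (act F 0 u) S2" using good_ex' by blast
  obtain S3 where S3: "\<forall>x\<in>set (f0w c). good (snd x) k u S3" using good_list by blast
  define S where "S = max S1 (max S2 S3)"
  have g1: "good c k u S" and g2: "good c k (act F 0 u) S" and g3: "\<forall>x\<in>set (f0w c). good (snd x) k u S"
    using S1 S2 S3 good_mono unfolding S_def by auto
  let ?br = "\<lambda>i. scale (of_nat ((n - 1 + i) choose i))
        (bracket_act scale act F b (- int n - int i) (vm c (k + int i) u)
         - scale ((-1) ^ n) (vm c (k - int n - int i) (bracket_act scale act F b (int i) u)))"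
  have hd: "(\<Sum>i<S. ?br i) = (\<Sum>(\<alpha>, w)\<leftarrow>(case b of E \<Rightarrow> [(-1, (H, n) # c)] | H \<Rightarrow> [(2, (F, n) # c)] | F \<Rightarrow> []). scale \<alpha> (vm w k u))"
  proof (cases b)
    case E
    have "?br i = scale (-1) (summ H n c k u i)" for i
      unfolding summ_def E by (simp add: act_scale vm_scale vm_neg scale_right_diff_distrib scale_left_commute)
    then show ?thesis using E vm_cons[OF g1, of H n] by (simp add: scale_sum_right sum_negf)
  next
    case H
    have "?br i = scale 2 (summ F n c k u i)" for i
      unfolding summ_def H by (simp add: act_scale vm_scale scale_right_diff_distrib scale_left_commute mult_ac)
    then show ?thesis using H vm_cons[OF g1, of F n] by (simp add: scale_sum_right)
  next
    case F
    then show ?thesis by simp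
  qed
  have tl: "(\<Sum>i<S. \<Sum>(\<alpha>, w)\<leftarrow>f0w c. scale \<alpha> (summ b n w k u i))
      = (\<Sum>(\<alpha>, w)\<leftarrow>f0w c. scale \<alpha> (vm ((b, n) # w) k u))"
  proof -
    have "(\<Sum>i<S. \<Sum>(\<alpha>, w)\<leftarrow>f0w c. scale \<alpha> (summ b n w k u i))
        = (\<Sum>x\<leftarrow>f0w c. \<Sum>i<S. scale (fst x) (summ b n (snd x) k u i))"
      using sum_list_swap[where g="\<lambda>i x. scale (fst x) (summ b n (snd x) k u i)" and A="{..<S}" and L="f0w c"]
      by (simp add: case_prod_unfold)
    also have "\<dots> = (\<Sum>x\<leftarrow>f0w c. scale (fst x) (vm ((b, n) # snd x) k u))"
    proof (rule arg_cong[where f=sum_list], rule map_cong[OF refl])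
      fix x assume "x \<in> set (f0w c)"
      then have "good (snd x) k u S" using g3 by blast
      then have "vm ((b, n) # snd x) k u = (\<Sum>i<S. summ b n (snd x) k u i)" by (rule vm_cons)
      then show "(\<Sum>i<S. scale (fst x) (summ b n (snd x) k u i)) = scale (fst x) (vm ((b, n) # snd x) k u)"
        by (simp only: scale_sum_right)
    qed
    finally show ?thesis by (simp add: case_prod_unfold)
  qed
  have "act F 0 (vm (p # c) k u) = (\<Sum>i<S. act F 0 (summ b n c k u i))"
    unfolding p vm_cons[OF g1] act_sum ..
  also have "\<dots> = (\<Sum>i<S. summ b n c k (act F 0 u) i) + (\<Sum>i<S. ?br i)
      + (\<Sum>i<S. \<Sum>(\<alpha>, w)\<leftarrow>f0w c. scale \<alpha> (summ b n w k u i))"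
    by (simp add: f0_step[OF Cons.IH] sum.distrib)
  also have "\<dots> = vm (p # c) k (act F 0 u) + (\<Sum>(\<alpha>, w)\<leftarrow>f0w (p # c). scale \<alpha> (vm w k u))"
    unfolding hd tl p vm_cons[OF g2, symmetric]
    by (simp add: case_prod_unfold o_def add.assoc)
  finally show ?case .
qed

lemma comm_f0_RR:
  "act F 0 (RR c A B u) = RR c A B (act F 0 u) + (\<Sum>(\<alpha>, w)\<leftarrow>f0w c. scale \<alpha> (RR w A B u))"
proof -
  have "act F 0 (RR c A B u) = (\<Sum>j\<le>A. scale (of_nat (A choose j)) (vm c (int j + B) (act F 0 u)))
      + (\<Sum>j\<le>A. \<Sum>x\<leftarrow>f0w c. scale (of_nat (A choose j)) (scale (fst x) (vm (snd x) (int j + B) u)))"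
    unfolding RR_def act_sum act_scale comm_f0
    by (simp add: scale_right_distrib sum.distrib scale_sum_list case_prod_unfold)
  also have "\<dots> = RR c A B (act F 0 u) + (\<Sum>(\<alpha>, w)\<leftarrow>f0w c. scale \<alpha> (RR w A B u))"
    unfolding sum_list_swap RR_def
    by (simp add: case_prod_unfold scale_sum_right scale_left_commute mult.commute)
  finally show ?thesis .
qed

lemma EXP:
  assumes g: "good c B u S"
  shows "RR ((b, n) # c) G B u = (\<Sum>i<S. scale (of_nat ((n - 1 + i) choose i))
     (act b (- int n - int i) (RR c G (B + int i) u)
      - scale ((-1) ^ n) (RR c G (B - int n - int i) (act b (int i) u))))"
proof -
  have "RR ((b, n) # c) G B u = (\<Sum>j\<le>G. scale (of_nat (G choose j)) (\<Sum>i<S. summ b n c (int j + B) u i))"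
    unfolding RR_def
  proof (rule sum.cong[OF refl])
    fix j
    have "good c (int j + B) u S" by (rule good_mono[OF g]) auto
    then show "scale (of_nat (G choose j)) (vm ((b, n) # c) (int j + B) u)
        = scale (of_nat (G choose j)) (\<Sum>i<S. summ b n c (int j + B) u i)"
      by (simp only: vm_cons)
  qed
  also have "\<dots> = (\<Sum>i<S. \<Sum>j\<le>G. scale (of_nat (G choose j)) (summ b n c (int j + B) u i))"
    by (simp add: scale_sum_right sum.swap[of _ "{..G}"])
  also have "\<dots> = (\<Sum>i<S. scale (of_nat ((n - 1 + i) choose i))
     (act b (- int n - int i) (RR c G (B + int i) u)
      - scale ((-1) ^ n) (RR c G (B - int n - int i) (act b (int i) u))))"
  proof (rule sum.cong[OF refl])
    fix i
    show "(\<Sum>j\<le>G. scale (of_nat (G choose j)) (summ b n c (int j + B) u i)) = scale (of_nat ((n - 1 + i) choose i))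
     (act b (- int n - int i) (RR c G (B + int i) u)
      - scale ((-1) ^ n) (RR c G (B - int n - int i) (act b (int i) u)))"
      unfolding summ_def RR_def act_sum act_scale
      by (simp add: scale_sum_right scale_right_diff_distrib sum_subtractf scale_left_commute algebra_simps)
  qed
  finally show ?thesis .
qed

end

locale wamz = wam +
  fixes z :: rat
  assumes z0: "0 < z" and z1: "z < 1"
begin

definition wt where "wt w = word_wt z w"
definition Kw where "Kw w = nat \<lfloor>wt w\<rfloor>"
definition ep where "ep w = eps_wt (wt w)"
definition Q where "Q w N u = RR w (Kw w) (-1 - ep w - int N) u"
definition ok where "ok w \<longleftrightarrow> (\<forall>p\<in>set w. 1 \<le> snd p)"

lemma wt_cons: "wt ((b, n) # c) = of_nat n + gen_shift z b + wt c"
  unfolding wt_def word_wt_def by simp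

lemma wt_nonneg: "ok w \<Longrightarrow> 0 \<le> wt w"
proof (induction w)
  case Nil then show ?case by (simp add: wt_def word_wt_def)
next
  case (Cons p w)
  obtain b n where p: "p = (b, n)" by (cases p)
  have n: "n \<ge> 1" and okw: "ok w" using Cons.prems p by (auto simp: ok_def)
  have "0 < of_nat n + gen_shift z b" using n z0 z1 by (cases b) auto
  then show ?case using Cons.IH[OF okw] p by (simp add: wt_cons)
qed

lemma Kw_int: "ok w \<Longrightarrow> int (Kw w) = \<lfloor>wt w\<rfloor>"
  unfolding Kw_def using wt_nonneg by simp

lemma f0w_props:
  "ok c \<Longrightarrow> x \<in> set (f0w c) \<Longrightarrow> length (snd x) = length c \<and> wt (snd x) = wt c + z \<and> ok (snd x)"
proof (induction c arbitrary: x)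
  case Nil then show ?case by simp
next
  case (Cons p c)
  obtain b n where p: "p = (b, n)" by (cases p)
  have okc: "ok c" and n: "n \<ge> 1" using Cons.prems p by (auto simp: ok_def)
  from Cons.prems(2) p consider
      (hd) "x \<in> set (case b of E \<Rightarrow> [(-1, (H, n) # c)] | H \<Rightarrow> [(2, (F, n) # c)] | F \<Rightarrow> [])"
    | (tl) y where "y \<in> set (f0w c)" "x = (fst y, (b, n) # snd y)"
    by (auto simp: case_prod_unfold)
  then show ?case
  proof cases
    case hd
    then show ?thesis using Cons.prems(1) p by (cases b) (auto simp: wt_cons ok_def)
  next
    case tl
    then show ?thesis using Cons.IH[OF okc tl(1)] n p by (auto simp: wt_cons ok_def)
  qed
qed

lemma SL:
  assumes IHc: "\<And>N v. Q c N v \<in> Wset" and okc: "ok c"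
    and G1: "\<lfloor>wt c\<rfloor> \<le> int G" and G2: "B + int G \<le> \<lfloor>wt c\<rfloor> - 1 - ep c"
  shows "RR c G B v \<in> Wset"
proof -
  define r where "r = G - Kw c"
  have G: "G = Kw c + r" using G1 Kw_int[OF okc] unfolding r_def by linarith
  have "RR c G B v = (\<Sum>j\<le>r. scale (of_nat (r choose j)) (RR c (Kw c) (B + int j) v))"
    unfolding G by (rule L1)
  also have "\<dots> \<in> Wset"
  proof (rule W_sum, rule W_scale)
    fix j assume j: "j \<in> {..r}"
    define N where "N = nat (-1 - ep c - B - int j)"
    have "-1 - ep c - int N = B + int j"
      using j G G2 Kw_int[OF okc] unfolding N_def by auto
    then have "RR c (Kw c) (B + int j) v = Q c N v" unfolding Q_def by simp
    then show "RR c (Kw c) (B + int j) v \<in> Wset" using IHc by simp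
  qed
  finally show ?thesis .
qed


lemma split_T:
  assumes "good c B u S"
  shows "RR ((b, n) # c) G B u = (\<Sum>i<S. scale (of_nat ((n - 1 + i) choose i)) (act b (- int n - int i) (RR c G (B + int i) u)))
     - (\<Sum>i<S. scale (of_nat ((n - 1 + i) choose i) * (-1) ^ n) (RR c G (B - int n - int i) (act b (int i) u)))"
  unfolding EXP[OF assms] by (simp add: scale_right_diff_distrib sum_subtractf)

lemma stepE:
  assumes oka: "ok ((E, n) # c)" and IHc: "\<And>N v. Q c N v \<in> Wset"
  shows "Q ((E, n) # c) N u \<in> Wset"
proof -
  let ?a = "(E, n) # c"
  have n: "n \<ge> 1" and okc: "ok c" using oka by (auto simp: ok_def)
  have wa: "wt ?a = of_nat n + (wt c - z)" by (simp add: wt_cons)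
  have Ga: "int (Kw ?a) = int n + \<lfloor>wt c - z\<rfloor>" using Kw_int[OF oka] wa floor_nat by simp
  have epa: "0 \<le> ep ?a" unfolding ep_def by (rule eps_ge0)
  define B0 where "B0 = -1 - ep ?a - int N"
  obtain S where g: "good c B0 u S" using good_ex' by blast
  have "Q ?a N u = RR ?a (Kw ?a) B0 u" unfolding Q_def B0_def ..
  also have "\<dots> = (\<Sum>i<S. scale (of_nat ((n - 1 + i) choose i)) (act E (- int n - int i) (RR c (Kw ?a) (B0 + int i) u)))
     - (\<Sum>i<S. scale (of_nat ((n - 1 + i) choose i) * (-1) ^ n) (RR c (Kw ?a) (B0 - int n - int i) (act E (int i) u)))"
    by (rule split_T[OF g])
  also have "\<dots> \<in> Wset"
  proof (rule W_diff; rule W_sum; rule W_scale)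
    fix i
    have "act E (- (int n + int i)) (RR c (Kw ?a) (B0 + int i) u) \<in> Wset" by (rule W_E) (use n in simp)
    moreover have "- (int n + int i) = - int n - int i" by simp
    ultimately show "act E (- int n - int i) (RR c (Kw ?a) (B0 + int i) u) \<in> Wset" by metis
  next
    fix i
    show "RR c (Kw ?a) (B0 - int n - int i) (act E (int i) u) \<in> Wset"
    proof (rule SL[OF IHc okc])
      show "\<lfloor>wt c\<rfloor> \<le> int (Kw ?a)" using Ga floorE1[OF z0 z1 n, of "wt c"] by simp
      show "B0 - int n - int i + int (Kw ?a) \<le> \<lfloor>wt c\<rfloor> - 1 - ep c"
        using Ga floorE2[OF z0 z1, of "wt c"] epa unfolding B0_def ep_def[of c] by simp
    qed
  qed
  finally show ?thesis .
qed


lemma good_h0: "good c B u S \<Longrightarrow> \<forall>t\<ge>S. vm c (B + int t) u = 0"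
  unfolding good_def by blast

lemma stepH:
  assumes oka: "ok ((H, n) # c)" and IHc: "\<And>N v. Q c N v \<in> Wset"
  shows "Q ((H, n) # c) N u \<in> Wset"
proof -
  let ?a = "(H, n) # c"
  let ?C = "\<lambda>i. of_nat ((n - 1 + i) choose i) :: complex"
  have n: "n \<ge> 1" and okc: "ok c" using oka by (auto simp: ok_def)
  have wa: "wt ?a = of_nat n + wt c" by (simp add: wt_cons)
  have Ga: "Kw ?a = Kw c + n" using Kw_int[OF oka] Kw_int[OF okc] wa floor_nat by simp
  have epa: "ep ?a = ep c" unfolding ep_def wa by (rule eps_nat)
  define B0 where "B0 = -1 - ep c - int N"
  obtain S where g: "good c B0 u S" using good_ex' by blast
  define X where "X i = RR c (Kw c + n) (B0 + int i) u" for i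
  have "Q ?a N u = RR ?a (Kw ?a) B0 u" unfolding Q_def B0_def epa ..
  also have "\<dots> = (\<Sum>i<S. scale (?C i) (act H (- int n - int i) (X i)))
     - (\<Sum>i<S. scale (?C i * (-1) ^ n) (RR c (Kw ?a) (B0 - int n - int i) (act H (int i) u)))"
    unfolding X_def Ga[symmetric] by (rule split_T[OF g])
  also have "\<dots> \<in> Wset"
  proof (rule W_diff)
    show "(\<Sum>i<S. scale (?C i * (-1) ^ n) (RR c (Kw ?a) (B0 - int n - int i) (act H (int i) u))) \<in> Wset"
    proof (rule W_sum; rule W_scale)
      fix i
      show "RR c (Kw ?a) (B0 - int n - int i) (act H (int i) u) \<in> Wset"
      proof (rule SL[OF IHc okc])
        show "\<lfloor>wt c\<rfloor> \<le> int (Kw ?a)" using Ga Kw_int[OF okc] by simp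
        show "B0 - int n - int i + int (Kw ?a) \<le> \<lfloor>wt c\<rfloor> - 1 - ep c"
          using Ga Kw_int[OF okc] unfolding B0_def by simp
      qed
    qed
  next
    let ?D = "(\<Sum>i<S. scale (?C i) (act H (- int n - int i) (X i) - scale ((-1) ^ (n - 1 + i)) (act H (-1) (X i))))"
    have D: "?D \<in> Wset"
    proof (rule W_sum; rule W_scale)
      fix i
      have "act H (- int (Suc (n - 1 + i))) (X i) - scale ((-1) ^ (n - 1 + i)) (act H (-1) (X i)) \<in> Wset"
        by (rule cong_h)
      moreover have "- int (Suc (n - 1 + i)) = - int n - int i" using n by simp
      ultimately show "act H (- int n - int i) (X i) - scale ((-1) ^ (n - 1 + i)) (act H (-1) (X i)) \<in> Wset"
        by metis
    qed
    have L: "(\<Sum>i<S. scale ((-1) ^ i * ?C i) (X i)) = Q c N u"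
      unfolding X_def Q_def B0_def[symmetric] by (rule L2[OF good_h0[OF g] n])
    have E: "(\<Sum>i<S. scale (?C i) (scale ((-1) ^ (n - 1 + i)) (act H (-1) (X i))))
        = act H (-1) (scale ((-1) ^ (n - 1)) (\<Sum>i<S. scale ((-1) ^ i * ?C i) (X i)))"
      by (simp add: act_sum act_scale scale_sum_right power_add mult_ac)
    have "act H (-1) (scale ((-1) ^ (n - 1)) (Q c N u)) \<in> Wset"
      by (rule h_pres, rule W_scale, rule IHc)
    then have "(\<Sum>i<S. scale (?C i) (scale ((-1) ^ (n - 1 + i)) (act H (-1) (X i)))) \<in> Wset"
      unfolding E L .
    then have "?D + (\<Sum>i<S. scale (?C i) (scale ((-1) ^ (n - 1 + i)) (act H (-1) (X i)))) \<in> Wset"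
      using D by (rule W_add[rotated])
    moreover have "?D + (\<Sum>i<S. scale (?C i) (scale ((-1) ^ (n - 1 + i)) (act H (-1) (X i))))
       = (\<Sum>i<S. scale (?C i) (act H (- int n - int i) (X i)))"
      by (simp add: scale_right_diff_distrib sum_subtractf)
    ultimately show "(\<Sum>i<S. scale (?C i) (act H (- int n - int i) (X i))) \<in> Wset" by simp
  qed
  finally show ?thesis .
qed


lemma stepF:
  assumes oka: "ok ((F, n) # c)" and IHc: "\<And>N v. Q c N v \<in> Wset"
    and IHf: "\<And>x N v. x \<in> set (f0w c) \<Longrightarrow> Q (snd x) N v \<in> Wset"
  shows "Q ((F, n) # c) N u \<in> Wset"
proof -
  let ?a = "(F, n) # c"
  let ?C = "\<lambda>i. of_nat ((n - 1 + i) choose i) :: complex"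
  let ?s = "(-1) ^ n :: complex"
  let ?f = "act F 0 u"
  have n: "n \<ge> 1" and okc: "ok c" using oka by (auto simp: ok_def)
  have r0: "0 \<le> wt c" by (rule wt_nonneg[OF okc])
  define Kf where "Kf = nat \<lfloor>wt c + z\<rfloor>"
  have Kf: "int Kf = \<lfloor>wt c + z\<rfloor>" unfolding Kf_def using r0 z0 by simp
  have wa: "wt ?a = of_nat n + (wt c + z)" by (simp add: wt_cons)
  have Ga: "Kw ?a = Kf + n" using Kw_int[OF oka] wa floor_nat Kf by simp
  have epa: "ep ?a = eps_wt (wt c + z)" unfolding ep_def wa by (rule eps_nat)
  have epa0: "0 \<le> ep ?a" unfolding ep_def by (rule eps_ge0)
  have F1: "\<lfloor>wt c\<rfloor> \<le> int Kf" using Kf floorF1[OF z0, of "wt c"] by simp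
  have F2: "int Kf - \<lfloor>wt c\<rfloor> + ep c \<le> 1" using Kf floorF2[OF z0 z1, of "wt c"] unfolding ep_def by simp
  define B0 where "B0 = -1 - ep ?a - int N"
  obtain S0 where g0: "good c B0 u S0" using good_ex' by blast
  define S where "S = max S0 1"
  have g: "good c B0 u S" using good_mono[OF g0] unfolding S_def by simp
  have S1: "S \<ge> 1" unfolding S_def by simp
  define X where "X i = RR c (Kf + n) (B0 + int i) u" for i
  define Y where "Y i = RR c (Kf + n) (B0 - int n - int i) (act F (int i) u)" for i
  have main: "Q ?a N u = (\<Sum>i<S. scale (?C i) (act F (- int n - int i) (X i)))
     - (\<Sum>i<S. scale (?C i * ?s) (Y i))"
    unfolding Q_def B0_def[symmetric] X_def Y_def Ga by (rule split_T[OF g])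
  define D where "D = (\<Sum>i<S. scale (?C i) (act F (- int n - int i) (X i) - scale ((-1) ^ (n + i)) (act F 0 (X i))))"
  have D: "D \<in> Wset" unfolding D_def
  proof (rule W_sum; rule W_scale)
    fix i
    have "act F (- int (n + i)) (X i) - scale ((-1) ^ (n + i)) (act F 0 (X i)) \<in> Wset"
      by (rule cong_f)
    moreover have "- int (n + i) = - int n - int i" by simp
    ultimately show "act F (- int n - int i) (X i) - scale ((-1) ^ (n + i)) (act F 0 (X i)) \<in> Wset"
      by metis
  qed
  have L: "(\<Sum>i<S. scale ((-1) ^ i * ?C i) (X i)) = RR c Kf B0 u"
    unfolding X_def by (rule L2[OF good_h0[OF g] n])
  define Fs where "Fs = (\<Sum>(\<alpha>, w)\<leftarrow>f0w c. scale \<alpha> (RR w Kf B0 u))"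
  have T1: "(\<Sum>i<S. scale (?C i) (act F (- int n - int i) (X i)))
      = D + scale ?s (RR c Kf B0 ?f) + scale ?s Fs"
  proof -
    have "(\<Sum>i<S. scale (?C i) (scale ((-1) ^ (n + i)) (act F 0 (X i))))
        = act F 0 (scale ?s (\<Sum>i<S. scale ((-1) ^ i * ?C i) (X i)))"
      by (simp add: act_sum act_scale scale_sum_right power_add mult_ac)
    also have "\<dots> = scale ?s (RR c Kf B0 ?f) + scale ?s Fs"
      unfolding L act_scale comm_f0_RR Fs_def by (simp add: scale_right_distrib)
    finally have e: "(\<Sum>i<S. scale (?C i) (scale ((-1) ^ (n + i)) (act F 0 (X i))))
        = scale ?s (RR c Kf B0 ?f) + scale ?s Fs" .
    have "(\<Sum>i<S. scale (?C i) (act F (- int n - int i) (X i)))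
        = D + (\<Sum>i<S. scale (?C i) (scale ((-1) ^ (n + i)) (act F 0 (X i))))"
      unfolding D_def by (simp add: scale_right_diff_distrib sum_subtractf)
    then show ?thesis unfolding e by (simp add: add.assoc)
  qed
  have Fs: "Fs \<in> Wset" unfolding Fs_def
  proof (rule W_sum_list)
    fix y assume y: "y \<in> set (f0w c)"
    have pr: "wt (snd y) = wt c + z" "ok (snd y)" using f0w_props[OF okc y] by auto
    have "RR (snd y) Kf B0 u \<in> Wset"
    proof (rule SL[OF IHf[OF y] pr(2)])
      show "\<lfloor>wt (snd y)\<rfloor> \<le> int Kf" using pr Kf by simp
      show "B0 + int Kf \<le> \<lfloor>wt (snd y)\<rfloor> - 1 - ep (snd y)"
        using pr Kf epa unfolding B0_def ep_def[of "snd y"] by simp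
    qed
    then show "(case y of (\<alpha>, w) \<Rightarrow> scale \<alpha> (RR w Kf B0 u)) \<in> Wset"
      using W_scale by (simp add: case_prod_unfold)
  qed
  have Ysplit: "(\<Sum>i<S. scale (?C i * ?s) (Y i)) = scale ?s (Y 0) + (\<Sum>i\<in>{1..<S}. scale (?C i * ?s) (Y i))"
  proof -
    have "{..<S} = insert 0 {1..<S}" using S1 by auto
    then show ?thesis by simp
  qed
  have Yrest: "(\<Sum>i\<in>{1..<S}. scale (?C i * ?s) (Y i)) \<in> Wset"
  proof (rule W_sum; rule W_scale)
    fix i assume i: "i \<in> {1..<S}"
    show "Y i \<in> Wset" unfolding Y_def
    proof (rule SL[OF IHc okc])
      show "\<lfloor>wt c\<rfloor> \<le> int (Kf + n)" using F1 by simp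
      show "B0 - int n - int i + int (Kf + n) \<le> \<lfloor>wt c\<rfloor> - 1 - ep c"
        using F2 i epa0 unfolding B0_def by simp
    qed
  qed
  define P where "P = (\<Sum>j<n. scale (of_nat (n choose j)) (RR c Kf (B0 - int n + int j) ?f))"
  have Y0: "Y 0 = RR c Kf B0 ?f + P"
  proof -
    have "Y 0 = (\<Sum>j\<le>n. scale (of_nat (n choose j)) (RR c Kf (B0 - int n + int j) ?f))"
      unfolding Y_def by (simp add: L1)
    also have "\<dots> = RR c Kf B0 ?f + P"
      unfolding P_def by (simp add: lessThan_Suc_atMost[symmetric])
    finally show ?thesis .
  qed
  have P: "P \<in> Wset" unfolding P_def
  proof (rule W_sum; rule W_scale)
    fix j assume j: "j \<in> {..<n}"
    show "RR c Kf (B0 - int n + int j) ?f \<in> Wset"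
    proof (rule SL[OF IHc okc])
      show "\<lfloor>wt c\<rfloor> \<le> int Kf" by (rule F1)
      show "B0 - int n + int j + int Kf \<le> \<lfloor>wt c\<rfloor> - 1 - ep c"
        using F2 j epa0 unfolding B0_def by simp
    qed
  qed
  have "Q ?a N u = D + scale ?s Fs - scale ?s P - (\<Sum>i\<in>{1..<S}. scale (?C i * ?s) (Y i))"
    unfolding main T1 Ysplit Y0 by (simp add: scale_right_distrib algebra_simps)
  also have "\<dots> \<in> Wset"
    by (intro W_diff W_add W_scale D Fs P Yrest)
  finally show ?thesis .
qed


lemma Q_in_W: "ok w \<Longrightarrow> Q w N u \<in> Wset"
proof (induction "length w" arbitrary: w N u rule: less_induct)
  case less
  show ?case
  proof (cases w)
    case Nil
    have "ep [] = 1" unfolding ep_def wt_def word_wt_def eps_wt_def by simp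
    moreover have "Kw [] = 0" unfolding Kw_def wt_def word_wt_def by simp
    ultimately show ?thesis using Nil by (simp add: Q_def RR_def W_zero)
  next
    case (Cons p c)
    obtain b n where p: "p = (b, n)" by (cases p)
    have okc: "ok c" using less.prems Cons by (auto simp: ok_def)
    have IHc: "\<And>N v. Q c N v \<in> Wset" using less.hyps[of c] okc Cons by simp
    have IHf: "\<And>x N v. x \<in> set (f0w c) \<Longrightarrow> Q (snd x) N v \<in> Wset"
    proof -
      fix x N v assume x: "x \<in> set (f0w c)"
      then have "length (snd x) = length c" "ok (snd x)" using f0w_props[OF okc x] by auto
      then show "Q (snd x) N v \<in> Wset" using less.hyps[of "snd x"] Cons by simp
    qed
    show ?thesis
    proof (cases b)
      case E then show ?thesis using stepE[OF _ IHc] less.prems Cons p by simp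
    next
      case F then show ?thesis using stepF[OF _ IHc IHf] less.prems Cons p by simp
    next
      case H then show ?thesis using stepH[OF _ IHc] less.prems Cons p by simp
    qed
  qed
qed

lemma res_Q: "res_elem scale act z w u = Q w 0 u"
  unfolding res_elem_def Let_def Q_def RR_def Kw_def ep_def wt_def
  by (simp add: algebra_simps)

lemma RR_nil: "RR [] G B v = (if B \<le> -1 \<and> -1 - B \<le> int G then scale (of_nat (G choose nat (-1 - B))) v else 0)"
proof (cases "B \<le> -1")
  case True
  have "RR [] G B v = (\<Sum>j\<le>G. if j = nat (-1 - B) then scale (of_nat (G choose j)) v else 0)"
    unfolding RR_def by (rule sum.cong) (use True in auto)
  then show ?thesis using True by (simp add: nat_le_iff)
next
  case False
  then show ?thesis unfolding RR_def by (intro trans[OF sum.neutral]) auto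
qed

lemma z_notint: "z \<notin> \<int>"
proof
  assume "z \<in> \<int>"
  then obtain m where "z = of_int m" by (auto elim: Ints_cases)
  then show False using z0 z1 by simp
qed

lemma single_RR:
  assumes "good [] B u S"
  shows "RR [(b, n)] G B u = (\<Sum>i<S. scale (of_nat ((n - 1 + i) choose i))
     (act b (- int n - int i) (RR [] G (B + int i) u)
      - scale ((-1) ^ n) (RR [] G (B - int n - int i) (act b (int i) u))))"
  by (rule EXP[OF assms])

lemma res_E: assumes n: "n \<ge> 1" shows "res_elem scale act z [(E, n)] u = act E (- int n) u"
proof -
  have w: "wt [(E, n)] = of_nat n - z" by (simp add: wt_cons wt_def word_wt_def)
  have K: "Kw [(E, n)] = n - 1"
  proof -
    have "\<lfloor>(of_nat n - z :: rat)\<rfloor> = int n - 1" using z0 z1 by (simp add: floor_eq_iff)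
    then show ?thesis unfolding Kw_def w using n by simp
  qed
  have e: "ep [(E, n)] = 0"
  proof -
    have "of_nat n - z \<notin> \<int>"
    proof
      assume "of_nat n - z \<in> \<int>"
      then have "of_nat n - (of_nat n - z) \<in> \<int>" by (intro Ints_diff) auto
      then show False using z_notint by simp
    qed
    then show ?thesis unfolding ep_def w eps_wt_def by simp
  qed
  obtain S0 where g0: "good [] (-1) u S0" using good_ex' by blast
  define S where "S = max S0 1"
  have g: "good [] (-1) u S" using good_mono[OF g0] unfolding S_def by simp
  have "res_elem scale act z [(E, n)] u = RR [(E, n)] (n - 1) (-1) u"
    unfolding res_Q Q_def K e by simp
  also have "\<dots> = (\<Sum>i<S. scale (of_nat ((n - 1 + i) choose i))
     (act E (- int n - int i) (RR [] (n - 1) (-1 + int i) u)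
      - scale ((-1) ^ n) (RR [] (n - 1) (-1 - int n - int i) (act E (int i) u))))"
    by (rule single_RR[OF g])
  also have "\<dots> = (\<Sum>i\<in>{0}. scale (of_nat ((n - 1 + i) choose i))
     (act E (- int n - int i) (RR [] (n - 1) (-1 + int i) u)
      - scale ((-1) ^ n) (RR [] (n - 1) (-1 - int n - int i) (act E (int i) u))))"
    by (rule sum.mono_neutral_right) (auto simp: S_def RR_nil)
  also have "\<dots> = act E (- int n) u" using n by (simp add: RR_nil)
  finally show ?thesis .
qed

lemma res_F: assumes n: "n \<ge> 1"
  shows "res_elem scale act z [(F, n)] u = act F (- int n) u - scale ((-1) ^ n) (act F 0 u)"
proof -
  have w: "wt [(F, n)] = of_nat n + z" by (simp add: wt_cons wt_def word_wt_def)
  have K: "Kw [(F, n)] = n"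
  proof -
    have "\<lfloor>(of_nat n + z :: rat)\<rfloor> = int n" using z0 z1 by (simp add: floor_eq_iff)
    then show ?thesis unfolding Kw_def w by simp
  qed
  have e: "ep [(F, n)] = 0"
  proof -
    have "of_nat n + z \<notin> \<int>"
    proof
      assume "of_nat n + z \<in> \<int>"
      then have "(of_nat n + z) - of_nat n \<in> \<int>" by (intro Ints_diff) auto
      then show False using z_notint by simp
    qed
    then show ?thesis unfolding ep_def w eps_wt_def by simp
  qed
  obtain S0 where g0: "good [] (-1) u S0" using good_ex' by blast
  define S where "S = max S0 1"
  have g: "good [] (-1) u S" using good_mono[OF g0] unfolding S_def by simp
  have "res_elem scale act z [(F, n)] u = RR [(F, n)] n (-1) u"
    unfolding res_Q Q_def K e by simp
  also have "\<dots> = (\<Sum>i<S. scale (of_nat ((n - 1 + i) choose i))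
     (act F (- int n - int i) (RR [] n (-1 + int i) u)
      - scale ((-1) ^ n) (RR [] n (-1 - int n - int i) (act F (int i) u))))"
    by (rule single_RR[OF g])
  also have "\<dots> = (\<Sum>i\<in>{0}. scale (of_nat ((n - 1 + i) choose i))
     (act F (- int n - int i) (RR [] n (-1 + int i) u)
      - scale ((-1) ^ n) (RR [] n (-1 - int n - int i) (act F (int i) u))))"
    by (rule sum.mono_neutral_right) (auto simp: S_def RR_nil)
  also have "\<dots> = act F (- int n) u - scale ((-1) ^ n) (act F 0 u)" using n by (simp add: RR_nil)
  finally show ?thesis .
qed

lemma res_H: assumes n: "n \<ge> 1"
  shows "res_elem scale act z [(H, n)] u = scale (of_nat n) (act H (- int n - 1) u + act H (- int n) u)"
proof -
  have w: "wt [(H, n)] = of_nat n" by (simp add: wt_cons wt_def word_wt_def)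
  have K: "Kw [(H, n)] = n" unfolding Kw_def w by simp
  have e: "ep [(H, n)] = 1" unfolding ep_def w eps_wt_def by simp
  obtain S0 where g0: "good [] (-2) u S0" using good_ex' by blast
  define S where "S = max S0 2"
  have g: "good [] (-2) u S" using good_mono[OF g0] unfolding S_def by simp
  have "res_elem scale act z [(H, n)] u = RR [(H, n)] n (-2) u"
    unfolding res_Q Q_def K e by simp
  also have "\<dots> = (\<Sum>i<S. scale (of_nat ((n - 1 + i) choose i))
     (act H (- int n - int i) (RR [] n (-2 + int i) u)
      - scale ((-1) ^ n) (RR [] n (-2 - int n - int i) (act H (int i) u))))"
    by (rule single_RR[OF g])
  also have "\<dots> = (\<Sum>i\<in>{0, 1}. scale (of_nat ((n - 1 + i) choose i))
     (act H (- int n - int i) (RR [] n (-2 + int i) u)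
      - scale ((-1) ^ n) (RR [] n (-2 - int n - int i) (act H (int i) u))))"
    by (rule sum.mono_neutral_right) (auto simp: S_def RR_nil)
  also have "\<dots> = scale (of_nat n) (act H (- int n - 1) u + act H (- int n) u)"
    using n by (simp add: RR_nil act_scale scale_right_distrib algebra_simps)
  finally show ?thesis .
qed


lemma O_sub: "O_space scale act z \<subseteq> Wset"
  unfolding O_space_def
proof (rule span_minimal)
  show "subspace Wset" unfolding Wset_def by (rule subspace_span)
  show "{res_elem scale act z w u |w u. \<forall>p\<in>set w. 1 \<le> snd p} \<subseteq> Wset"
  proof
    fix x assume "x \<in> {res_elem scale act z w u |w u. \<forall>p\<in>set w. 1 \<le> snd p}"
    then obtain w u where "x = res_elem scale act z w u" "ok w" unfolding ok_def by blast
    then show "x \<in> Wset" using Q_in_W res_Q by simp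
  qed
qed

lemma res_in_O: "(\<forall>p\<in>set w. 1 \<le> snd p) \<Longrightarrow> res_elem scale act z w u \<in> O_space scale act z"
  unfolding O_space_def by (rule span_base) blast

lemma W_sub: "Wset \<subseteq> O_space scale act z"
  unfolding Wset_def
proof (rule span_minimal)
  show "subspace (O_space scale act z)" unfolding O_space_def by (rule subspace_span)
  show "{act F (- m) u + act F (1 - m) u |m u. 0 < m} \<union> {act E (- m) u |m u. 0 < m} \<union>
    {act H (- m - 1) u + act H (- m) u |m u. 0 < m} \<subseteq> O_space scale act z"
  proof (intro Un_least subsetI)
    fix x assume "x \<in> {act F (- m) u + act F (1 - m) u |m u. 0 < m}"
    then obtain m u where m: "0 < m" and x: "x = act F (- m) u + act F (1 - m) u" by blast
    define k where "k = nat m"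
    have mk: "m = int k" "k \<ge> 1" using m unfolding k_def by auto
    show "x \<in> O_space scale act z"
    proof (cases "k = 1")
      case True
      have "x = res_elem scale act z [(F, 1)] u" using res_F[of 1 u] x mk True by simp
      then show ?thesis using res_in_O[of "[(F, 1)]"] by simp
    next
      case False
      then have k2: "k - 1 \<ge> 1" using mk by simp
      have "res_elem scale act z [(F, k)] u + res_elem scale act z [(F, k - 1)] u
          = act F (- int k) u + act F (- int (k - 1)) u
            - scale ((-1) ^ k + (-1) ^ (k - 1)) (act F 0 u)"
        using res_F[OF mk(2), of u] res_F[OF k2, of u] by (simp add: scale_left_distrib algebra_simps)
      also have "(-1) ^ k + (-1) ^ (k - 1) = (0::complex)"
      proof -
        have "k = Suc (k - 1)" using mk by simp
        then have "(-1::complex) ^ k = - ((-1) ^ (k - 1))" by (metis power_Suc mult_minus1)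
        then show ?thesis by simp
      qed
      finally have "res_elem scale act z [(F, k)] u + res_elem scale act z [(F, k - 1)] u = x"
        using x mk k2 by (simp add: of_nat_diff)
      moreover have "res_elem scale act z [(F, k)] u + res_elem scale act z [(F, k - 1)] u \<in> O_space scale act z"
        unfolding O_space_def
        by (rule span_add; rule span_base) (use mk k2 in auto)
      ultimately show ?thesis by simp
    qed
  next
    fix x assume "x \<in> {act E (- m) u |m u. 0 < m}"
    then obtain m u where m: "0 < m" and x: "x = act E (- m) u" by blast
    have "x = res_elem scale act z [(E, nat m)] u" using res_E[of "nat m" u] x m by simp
    then show "x \<in> O_space scale act z" using res_in_O[of "[(E, nat m)]"] m by simp
  next
    fix x assume "x \<in> {act H (- m - 1) u + act H (- m) u |m u. 0 < m}"
    then obtain m u where m: "0 < m" and x: "x = act H (- m - 1) u + act H (- m) u" by blast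
    have r: "res_elem scale act z [(H, nat m)] u = scale (of_int m) x" using res_H[of "nat m" u] x m by simp
    have "scale (1 / of_int m) (res_elem scale act z [(H, nat m)] u) \<in> O_space scale act z"
      unfolding O_space_def by (rule span_scale, rule span_base) (use m in auto)
    moreover have "scale (1 / of_int m) (res_elem scale act z [(H, nat m)] u) = x"
      unfolding r using m by simp
    ultimately show "x \<in> O_space scale act z" by simp
  qed
qed

lemma main_eq: "O_space scale act z = Wset"
  using O_sub W_sub by blast

end

theorem proposition4p1:
  fixes scale :: "complex \<Rightarrow> 'm::ab_group_add \<Rightarrow> 'm"
    and act :: "sl2 \<Rightarrow> int \<Rightarrow> 'm \<Rightarrow> 'm"
    and l :: complex and z :: rat
  assumes "l \<noteq> -2"
    and "0 < z" and "z < 1"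
    and "weak_affine_module scale l act"
  shows "O_space scale act z = module.span scale
     ({act F (- m) u + act F (1 - m) u | m u. m > 0}
      \<union> {act E (- m) u | m u. m > 0}
      \<union> {act H (- m - 1) u + act H (- m) u | m u. m > 0})"
proof -
  have vs: "vector_space scale"
    and lin: "\<And>a n. Vector_Spaces.linear scale scale (act a n)"
    and cm: "\<And>a b m n u. act a m (act b n u) - act b n (act a m u) =
          bracket_act scale act a b (m + n) u
          + scale (of_int m * sl2_form a b * (if m + n = 0 then 1 else 0) * l) u"
    and tr: "\<And>a u. \<exists>N. \<forall>n\<ge>N. act a n u = 0"
    using assms(4) unfolding weak_affine_module_def by blast+
  interpret W: wamz scale act l z
    by (rule wamz.intro[OF wam.intro[OF vs wam_axioms.intro[OF lin cm tr]] wamz_axioms.intro[OF assms(2,3)]])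
  show ?thesis using W.main_eq unfolding W.Wset_def .
qed

end
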